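(* Let $F(u):=\tilde{\mathcal E}_0(u)/\zeta(u)-E$, a formal power series in $u$ with operator coefficients, written $F(u)=\sum_{k\ge1}F_ku^k$. Then, as formal series in $z$: (i) $\mathcal D^{(p)}(z)=F(z)=\tilde{\mathcal E}_0(z)/\zeta(z)-E$; (ii) $\mathcal D^{(h)}(z)=\exp\Big(\sum_{k\ge1}F_k\,\big(z^2\tfrac{d}{dz}\big)^k(\log z)\Big)$ (written in the paper as $z^{F(z^2 d/dz)}$); (iii) $\mathcal D^{(\sigma)}(z)=\exp\Big(-\sum_{k\ge1}F_k\,\big(-z^2\tfrac{d}{dz}\big)^k(\log z)\Big)$ (written as $z^{-F(-z^2d/dz)}$). Moreover $\mathcal D^{(h)}(z)=\mathcal D^{(\sigma)}(-z)^{-1}$.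
   Context: $V_0$ is the charge-zero semi-infinite wedge space with basis $v_\lambda=z^{\lambda_1}\wedge z^{\lambda_2-1}\wedge z^{\lambda_3-2}\wedge\cdots$ indexed by all partitions $\lambda$. The energy operator is $E v_\lambda=|\lambda|v_\lambda$. With $\zeta(u)=e^{u/2}-e^{-u/2}$, the Casimir operator is $\tilde{\mathcal E}_0(u)v_\lambda=\sum_{i\ge1}\big(e^{u(\lambda_i-i+\frac12)}-e^{u(-i+\frac12)}\big)v_\lambda$. For $\lambda\vdash n$, $\mathsf{cr}^\lambda$ is the vector of contents (column index minus row index) of the $n$ boxes of $\lambda$. $p_k,h_k,\sigma_k$ denote power sums, complete homogeneous and elementary symmetric polynomials. The operators $\mathcal D^{(p)},\mathcal D^{(h)},\mathcal D^{(\sigma)}$ are diagonal in the basis $v_\lambda$: $\mathcal D^{(p)}(z)v_\lambda=\sum_{k\ge1}\frac{z^k}{k!}p_k(\mathsf{cr}^\lambda)v_\lambda$, $\mathcal D^{(h)}(z)v_\lambda=\sum_{k\ge0}z^kh_k(\mathsf{cr}^\lambda)v_\lambda$, $\mathcal D^{(\sigma)}(z)v_\lambda=\sum_{k\ge0}z^k\sigma_k(\mathsf{cr}^\lambda)v_\lambda$. *)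

theory Defs
  imports "HOL-Computational_Algebra.Formal_Power_Series" "HOL-Library.Multiset"
begin

text \<open>Partitions: lists of positive integers in weakly decreasing order.
  lambda_i (1-indexed) is xs!(i-1) for i \<le> length xs and 0 otherwise.\<close>

definition is_partition :: "nat list \<Rightarrow> bool" where
  "is_partition xs \<longleftrightarrow> sorted (rev xs) \<and> 0 \<notin> set xs"

definition part_nth :: "nat list \<Rightarrow> nat \<Rightarrow> nat" where
  "part_nth xs i = (if 1 \<le> i \<and> i \<le> length xs then xs ! (i - 1) else 0)"

definition boxes :: "nat list \<Rightarrow> (nat \<times> nat) set" where
  "boxes xs = {(i, j). 1 \<le> i \<and> 1 \<le> j \<and> j \<le> part_nth xs i}"

definition content :: "nat \<times> nat \<Rightarrow> real" where
  "content b = real (snd b) - real (fst b)"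

text \<open>Symmetric functions evaluated at the content vector (indexed by boxes).\<close>

definition p_cr :: "nat list \<Rightarrow> nat \<Rightarrow> real" where
  "p_cr xs k = (\<Sum>b\<in>boxes xs. content b ^ k)"

definition h_cr :: "nat list \<Rightarrow> nat \<Rightarrow> real" where
  "h_cr xs k = (\<Sum>M\<in>{M. set_mset M \<subseteq> boxes xs \<and> size M = k}. \<Prod>b\<in>#M. content b)"

definition sigma_cr :: "nat list \<Rightarrow> nat \<Rightarrow> real" where
  "sigma_cr xs k = (\<Sum>S\<in>{S. S \<subseteq> boxes xs \<and> card S = k}. \<Prod>b\<in>S. content b)"

text \<open>Eigenvalues on v_lambda of the diagonal operators (as formal power series).\<close>

definition energy :: "nat list \<Rightarrow> real" where
  "energy xs = real (sum_list xs)"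

definition zeta_fps :: "real fps" where
  "zeta_fps = fps_exp (1/2) - fps_exp (-(1/2))"

definition casimir0 :: "nat list \<Rightarrow> real fps" where
  "casimir0 xs = (\<Sum>i\<in>{1..length xs}.
      fps_exp (real (part_nth xs i) - real i + 1/2) - fps_exp (- real i + 1/2))"

definition F_ser :: "nat list \<Rightarrow> real fps" where
  "F_ser xs = casimir0 xs / zeta_fps - fps_const (energy xs)"

definition Dp :: "nat list \<Rightarrow> real fps" where
  "Dp xs = Abs_fps (\<lambda>k. if k = 0 then 0 else p_cr xs k / fact k)"

definition Dh :: "nat list \<Rightarrow> real fps" where
  "Dh xs = Abs_fps (\<lambda>k. h_cr xs k)"

definition Dsigma :: "nat list \<Rightarrow> real fps" where
  "Dsigma xs = Abs_fps (\<lambda>k. sigma_cr xs k)"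

text \<open>The derivation c z^2 d/dz on formal power series, and
  (c z^2 d/dz)^k (log z) for k \<ge> 1, using (c z^2 d/dz)(log z) = c z.\<close>

definition zdz :: "real \<Rightarrow> real fps \<Rightarrow> real fps" where
  "zdz c f = fps_const c * fps_X ^ 2 * fps_deriv f"

definition zdz_pow_log :: "real \<Rightarrow> nat \<Rightarrow> real fps" where
  "zdz_pow_log c k = (zdz c ^^ (k - 1)) (fps_const c * fps_X)"

text \<open>Coefficientwise infinite sum of a sequence of power series with
  subdegree of the k-th term at least k (which holds in our uses).\<close>

definition fps_series :: "(nat \<Rightarrow> real fps) \<Rightarrow> real fps" where
  "fps_series a = Abs_fps (\<lambda>n. \<Sum>k\<le>n. fps_nth (a k) n)"

text \<open>exp of a power series with zero constant term.\<close>

definition fps_expf :: "real fps \<Rightarrow> real fps" where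
  "fps_expf g = fps_exp 1 oo g"

end

theory Submission
  imports Defs
begin

unbundle fps_syntax

lemma ode_unique0:
  fixes D g :: "real fps"
  assumes "fps_deriv D = D * g" "D $ 0 = 0"
  shows "D = 0"
proof -
  have "\<forall>m\<le>n. D $ m = 0" for n
  proof (induction n)
    case 0 then show ?case using assms by simp
  next
    case (Suc n)
    have "(fps_deriv D) $ n = (\<Sum>i=0..n. D$i * g$(n - i))"
      using assms(1) by (simp add: fps_mult_nth)
    also have "\<dots> = 0" using Suc by simp
    finally have "D $ Suc n = 0" by simp
    then show ?case using Suc by (auto simp: le_Suc_eq)
  qed
  then show ?thesis by (auto simp: fps_eq_iff)
qed

lemma ode_unique:
  fixes A B g :: "real fps"
  assumes "fps_deriv A = A * g" "fps_deriv B = B * g" "A $ 0 = B $ 0"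
  shows "A = B"
proof -
  have "fps_deriv (A - B) = (A - B) * g" using assms by (simp add: algebra_simps)
  then have "A - B = 0" using ode_unique0[of "A - B" g] assms(3) by simp
  then show ?thesis by simp
qed

lemma expf_deriv:
  assumes "g $ 0 = 0"
  shows "fps_deriv (fps_expf g) = fps_expf g * fps_deriv g"
  using assms unfolding fps_expf_def by (simp add: fps_compose_deriv)

lemma expf_0: "fps_expf g $ 0 = 1"
  unfolding fps_expf_def by simp

lemma expf_add:
  assumes "g $ 0 = 0" "h $ 0 = 0"
  shows "fps_expf (g + h) = fps_expf g * fps_expf h"
  by (rule ode_unique[where g = "fps_deriv (g + h)"])
     (use assms in \<open>simp_all add: expf_deriv expf_0 algebra_simps\<close>)

lemma expf_zero: "fps_expf 0 = 1"
  by (rule ode_unique[where g = 0]) (simp_all add: expf_deriv expf_0)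

lemma expf_sum:
  assumes "finite S" "\<And>b. b \<in> S \<Longrightarrow> f b $ 0 = 0"
  shows "fps_expf (\<Sum>b\<in>S. f b) = (\<Prod>b\<in>S. fps_expf (f b))"
  using assms
proof (induction S rule: finite_induct)
  case empty then show ?case by (simp add: expf_zero)
next
  case (insert a S)
  have "(\<Sum>b\<in>S. f b) $ 0 = 0" using insert by (simp add: fps_sum_nth)
  then show ?case using insert by (simp add: expf_add)
qed

definition LL :: "real \<Rightarrow> real fps" where
  "LL c = Abs_fps (\<lambda>n. if n = 0 then 0 else c ^ n / real n)"

lemma LL_deriv_eq: "fps_deriv (LL c) = Abs_fps (\<lambda>n. c ^ Suc n)"
  unfolding LL_def fps_eq_iff by (simp del: of_nat_Suc)

lemma LL_deriv: "fps_deriv (LL c) * (1 - fps_const c * fps_X) = fps_const c"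
proof -
  have "fps_deriv (LL c) * (1 - fps_const c * fps_X) = fps_deriv (LL c) - fps_const c * (fps_X * fps_deriv (LL c))"
    by (simp add: algebra_simps)
  also have "\<dots> = fps_const c"
    unfolding LL_deriv_eq fps_eq_iff
  proof
    fix n show "(Abs_fps (\<lambda>n. c ^ Suc n) - fps_const c * (fps_X * Abs_fps (\<lambda>n. c ^ Suc n))) $ n = fps_const c $ n"
      by (cases n) (auto simp: fps_X_mult_nth)
  qed
  finally show ?thesis .
qed


lemma expf_LL: "fps_expf (LL c) * (1 - fps_const c * fps_X) = 1"
proof -
  define P where "P = fps_expf (LL c) * (1 - fps_const c * fps_X)"
  have l0: "LL c $ 0 = 0" by (simp add: LL_def)
  have "fps_deriv P =
      fps_expf (LL c) * (fps_deriv (LL c) * (1 - fps_const c * fps_X)) - fps_expf (LL c) * fps_const c"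
    unfolding P_def using l0 by (simp add: expf_deriv algebra_simps)
  also have "\<dots> = 0" by (simp add: LL_deriv)
  finally have "fps_deriv P = 0" .
  then have "P = fps_const (P $ 0)" using fps_deriv_eq_0_iff by blast
  moreover have "P $ 0 = 1" unfolding P_def by (simp add: expf_0)
  ultimately show ?thesis unfolding P_def by simp
qed

lemma expf_LL2: "fps_expf (- LL (- c)) = 1 + fps_const c * fps_X"
proof (rule ode_unique[where g = "fps_deriv (- LL (- c))"])
  have l0: "LL (-c) $ 0 = 0" by (simp add: LL_def)
  then show "fps_deriv (fps_expf (- LL (- c))) = fps_expf (- LL (- c)) * fps_deriv (- LL (- c))"
    by (simp add: expf_deriv)
  have h: "fps_deriv (LL (-c)) * (1 - fps_const (-c) * fps_X) = fps_const (-c)" by (rule LL_deriv)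
  have "(1 + fps_const c * fps_X) * fps_deriv (- LL (- c)) = - (fps_deriv (LL (-c)) * (1 - fps_const (-c) * fps_X))"
    by (simp add: algebra_simps flip: fps_const_neg)
  also have "\<dots> = fps_const c" unfolding h by simp
  finally show "fps_deriv (1 + fps_const c * fps_X) = (1 + fps_const c * fps_X) * fps_deriv (- LL (- c))"
    by simp
  show "fps_expf (- LL (- c)) $ 0 = (1 + fps_const c * fps_X) $ 0" by (simp add: expf_0)
qed


lemma boxes_eq: "boxes xs = Sigma {1..length xs} (\<lambda>i. {1..part_nth xs i})"
  by (auto simp: boxes_def part_nth_def split: if_splits)

lemma finite_boxes: "finite (boxes xs)"
  unfolding boxes_eq by auto

lemma card_boxes: "real (card (boxes xs)) = energy xs"
proof -
  have "card (boxes xs) = (\<Sum>i\<in>{1..length xs}. part_nth xs i)"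
    unfolding boxes_eq by (simp add: card_SigmaI)
  also have "\<dots> = (\<Sum>i<length xs. part_nth xs (Suc i))"
    using sum.atLeast1_atMost_eq by (metis One_nat_def)
  also have "\<dots> = (\<Sum>i<length xs. xs ! i)"
    by (rule sum.cong) (auto simp: part_nth_def)
  also have "\<dots> = sum_list xs" by (simp add: sum_list_sum_nth atLeast0LessThan)
  finally show ?thesis by (simp add: energy_def)
qed

lemma zeta_exp: "zeta_fps * fps_exp a = fps_exp (a + 1/2) - fps_exp (a + -(1/2))"
  unfolding zeta_fps_def by (simp only: fps_exp_add_mult algebra_simps)

lemma row_eq: "fps_exp (real m - real i + 1/2) - fps_exp (- real i + 1/2)
   = zeta_fps * (\<Sum>j\<in>{1..m}. fps_exp (real j - real i))"
proof (induction m)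
  case 0 then show ?case by simp
next
  case (Suc m)
  have "zeta_fps * (\<Sum>j\<in>{1..Suc m}. fps_exp (real j - real i))
     = zeta_fps * (\<Sum>j\<in>{1..m}. fps_exp (real j - real i)) + zeta_fps * fps_exp (real (Suc m) - real i)"
    by (simp add: algebra_simps)
  also have "zeta_fps * fps_exp (real (Suc m) - real i) =
       fps_exp (real (Suc m) - real i + 1/2) - fps_exp (real m - real i + 1/2)"
    unfolding zeta_exp by (simp add: algebra_simps)
  finally show ?case using Suc by (simp add: algebra_simps)
qed

definition SS :: "nat list \<Rightarrow> real fps" where
  "SS xs = (\<Sum>b\<in>boxes xs. fps_exp (content b))"

lemma casimir_eq: "casimir0 xs = zeta_fps * SS xs"
proof -
  have "SS xs = (\<Sum>i\<in>{1..length xs}. \<Sum>j\<in>{1..part_nth xs i}. fps_exp (real j - real i))"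
    unfolding SS_def boxes_eq by (simp add: sum.Sigma content_def case_prod_unfold)
  moreover have "casimir0 xs = (\<Sum>i\<in>{1..length xs}. zeta_fps * (\<Sum>j\<in>{1..part_nth xs i}. fps_exp (real j - real i)))"
    unfolding casimir0_def by (rule sum.cong[OF refl], rule row_eq)
  ultimately show ?thesis by (simp add: sum_distrib_left)
qed

lemma zeta_nz: "zeta_fps \<noteq> 0"
proof
  assume "zeta_fps = 0"
  then have "zeta_fps $ 1 = 0" by simp
  then show False unfolding zeta_fps_def by simp
qed

lemma F_eq: "F_ser xs = SS xs - fps_const (real (card (boxes xs)))"
  unfolding F_ser_def casimir_eq using zeta_nz by (simp add: card_boxes)

lemma Dp_eq: "Dp xs = F_ser xs"
  unfolding F_eq fps_eq_iff
proof
  fix k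
  show "Dp xs $ k = (SS xs - fps_const (real (card (boxes xs)))) $ k"
    by (cases k) (simp_all add: Dp_def SS_def fps_sum_nth p_cr_def sum_divide_distrib algebra_simps)
qed

lemma F_nth: "k \<noteq> 0 \<Longrightarrow> F_ser xs $ k = p_cr xs k / fact k"
  unfolding Dp_eq[symmetric] by (simp add: Dp_def)


lemma deriv_monom: "fps_deriv (fps_const (a::real) * fps_X ^ Suc k) = fps_const (a * of_nat (Suc k)) * fps_X ^ k"
  by (simp only: fps_eq_iff fps_deriv_nth fps_mult_left_const_nth fps_X_power_nth) (auto simp: mult.commute)


lemma zdz_pow_log_Suc: "zdz_pow_log c (Suc k) = fps_const (c ^ Suc k * fact k) * fps_X ^ Suc k"
proof (induction k)
  case 0 then show ?case by (simp add: zdz_pow_log_def)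
next
  case (Suc k)
  have "zdz_pow_log c (Suc (Suc k)) = zdz c (zdz_pow_log c (Suc k))"
    by (simp add: zdz_pow_log_def)
  also have "\<dots> = fps_const c * fps_X ^ 2 * (fps_const (c ^ Suc k * fact k * of_nat (Suc k)) * fps_X ^ k)"
    unfolding Suc zdz_def deriv_monom ..
  also have "\<dots> = (fps_const c * fps_const (c ^ Suc k * fact k * of_nat (Suc k))) * (fps_X ^ 2 * fps_X ^ k)"
    by (simp only: mult_ac)
  also have "\<dots> = fps_const (c ^ Suc (Suc k) * fact (Suc k)) * fps_X ^ Suc (Suc k)"
    by (simp only: fps_const_mult power_add[symmetric]) (simp add: algebra_simps)
  finally show ?case .
qed

lemma series_eq:
  "fps_series (\<lambda>k. if k = 0 then 0 else fps_const (F_ser xs $ k) * zdz_pow_log c k)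
   = (\<Sum>b\<in>boxes xs. LL (c * content b))"
  unfolding fps_eq_iff
proof
  fix n
  have "fps_series (\<lambda>k. if k = 0 then 0 else fps_const (F_ser xs $ k) * zdz_pow_log c k) $ n
     = (\<Sum>k\<le>n. if k = n then (if n = 0 then 0 else F_ser xs $ n * c ^ n * fact (n - 1)) else 0)"
    unfolding fps_series_def fps_nth_Abs_fps
    by (rule sum.cong) (auto simp: zdz_pow_log_Suc gr0_conv_Suc)
  also have "\<dots> = (if n = 0 then 0 else F_ser xs $ n * c ^ n * fact (n - 1))" by simp
  also have "\<dots> = (\<Sum>b\<in>boxes xs. LL (c * content b)) $ n"
  proof (cases "n = 0")
    case True then show ?thesis by (simp add: fps_sum_nth LL_def)
  next
    case False
    then have f: "fact n = real n * fact (n - 1)" by (simp add: fact_reduce)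
    have "fact (n - 1) \<noteq> (0::real)" by simp
    then show ?thesis using False
      by (simp add: fps_sum_nth LL_def F_nth p_cr_def f sum_divide_distrib sum_distrib_left
          sum_distrib_right power_mult_distrib field_simps)
  qed
  finally show "fps_series (\<lambda>k. if k = 0 then 0 else fps_const (F_ser xs $ k) * zdz_pow_log c k) $ n
     = (\<Sum>b\<in>boxes xs. LL (c * content b)) $ n" .
qed


definition hh :: "(nat \<times> nat) set \<Rightarrow> nat \<Rightarrow> real" where
  "hh B k = (\<Sum>M\<in>{M. set_mset M \<subseteq> B \<and> size M = k}. \<Prod>b\<in>#M. content b)"

lemma hset_finite: "finite B \<Longrightarrow> finite {M. set_mset M \<subseteq> B \<and> size M = k}"
  using finite_multisets_of_size[of B k] by (simp add: multisets_of_size_def)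

lemma hh_0: "hh B 0 = 1"
proof -
  have "{M. set_mset M \<subseteq> B \<and> size M = 0} = {{#}}" by auto
  then show ?thesis by (simp add: hh_def)
qed

lemma hh_Suc:
  assumes "finite B" "a \<notin> B"
  shows "hh (insert a B) (Suc k) = hh B (Suc k) + content a * hh (insert a B) k"
proof -
  let ?A = "{M. set_mset M \<subseteq> B \<and> size M = Suc k}"
  let ?C = "{M. set_mset M \<subseteq> insert a B \<and> size M = k}"
  have eq: "{M. set_mset M \<subseteq> insert a B \<and> size M = Suc k} = ?A \<union> add_mset a ` ?C"
  proof (intro equalityI subsetI)
    fix M assume M: "M \<in> {M. set_mset M \<subseteq> insert a B \<and> size M = Suc k}"
    show "M \<in> ?A \<union> add_mset a ` ?C"
    proof (cases "a \<in># M")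
      case True
      then have "M = add_mset a (M - {#a#})" by simp
      moreover have "M - {#a#} \<in> ?C" using M True
        by (auto simp: size_Diff_singleton dest: in_diffD)
      ultimately show ?thesis by blast
    next
      case False then show ?thesis using M by auto
    qed
  qed auto
  have disj: "?A \<inter> add_mset a ` ?C = {}" using assms by auto
  have fin: "finite ?A" "finite ?C" using assms hset_finite[of "insert a B"] hset_finite[of B] by auto
  have "hh (insert a B) (Suc k) = (\<Sum>M\<in>?A. \<Prod>b\<in>#M. content b) + (\<Sum>M\<in>add_mset a ` ?C. \<Prod>b\<in>#M. content b)"
    unfolding hh_def eq using fin disj by (simp add: sum.union_disjoint)
  also have "(\<Sum>M\<in>add_mset a ` ?C. \<Prod>b\<in>#M. content b) = (\<Sum>M\<in>?C. content a * (\<Prod>b\<in>#M. content b))"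
    by (subst sum.reindex) (auto simp: inj_on_def)
  finally show ?thesis by (simp add: hh_def sum_distrib_left)
qed

definition QQ :: "(nat \<times> nat) set \<Rightarrow> real fps" where
  "QQ B = (\<Prod>b\<in>B. 1 - fps_const (content b) * fps_X)"

lemma hh_gen: "finite B \<Longrightarrow> Abs_fps (hh B) * QQ B = 1"
proof (induction B rule: finite_induct)
  case empty
  have "Abs_fps (hh {}) = 1"
  proof (subst fps_eq_iff, intro allI)
    fix n show "Abs_fps (hh {}) $ n = (1::real fps) $ n"
      by (cases n) (auto simp: hh_0 hh_def)
  qed
  then show ?case by (simp add: QQ_def)
next
  case (insert a B)
  have "Abs_fps (hh (insert a B)) * (1 - fps_const (content a) * fps_X) = Abs_fps (hh B)"
  proof (subst fps_eq_iff, intro allI)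
    fix n
    have e: "Abs_fps (hh (insert a B)) * (1 - fps_const (content a) * fps_X) =
       Abs_fps (hh (insert a B)) - fps_const (content a) * (fps_X * Abs_fps (hh (insert a B)))"
      by (simp add: algebra_simps)
    show "(Abs_fps (hh (insert a B)) * (1 - fps_const (content a) * fps_X)) $ n = Abs_fps (hh B) $ n"
      unfolding e by (cases n) (auto simp: hh_0 hh_Suc insert fps_X_mult_nth)
  qed
  then show ?case using insert by (simp add: QQ_def mult.assoc[symmetric])
qed

definition ss :: "(nat \<times> nat) set \<Rightarrow> nat \<Rightarrow> real" where
  "ss B k = (\<Sum>S\<in>{S. S \<subseteq> B \<and> card S = k}. \<Prod>b\<in>S. content b)"

lemma ss_0: "finite B \<Longrightarrow> ss B 0 = 1"
proof -
  assume "finite B"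
  then have "{S. S \<subseteq> B \<and> card S = 0} = {{}}" by (auto simp: card_eq_0_iff dest: rev_finite_subset)
  then show ?thesis by (simp add: ss_def)
qed

lemma ss_Suc:
  assumes "finite B" "a \<notin> B"
  shows "ss (insert a B) (Suc k) = ss B (Suc k) + content a * ss B k"
proof -
  let ?A = "{S. S \<subseteq> B \<and> card S = Suc k}"
  let ?C = "{S. S \<subseteq> B \<and> card S = k}"
  have eq: "{S. S \<subseteq> insert a B \<and> card S = Suc k} = ?A \<union> insert a ` ?C"
  proof (intro equalityI subsetI)
    fix S assume S: "S \<in> {S. S \<subseteq> insert a B \<and> card S = Suc k}"
    show "S \<in> ?A \<union> insert a ` ?C"
    proof (cases "a \<in> S")
      case True
      then have "S = insert a (S - {a})" by auto
      moreover have "S - {a} \<in> ?C" using S True assms(1)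
        by (auto simp: card_Diff_singleton intro: finite_subset)
      ultimately show ?thesis by blast
    next
      case False then show ?thesis using S by auto
    qed
  next
    fix S assume "S \<in> ?A \<union> insert a ` ?C"
    then show "S \<in> {S. S \<subseteq> insert a B \<and> card S = Suc k}"
    proof
      assume "S \<in> ?A" then show ?thesis by auto
    next
      assume "S \<in> insert a ` ?C"
      then obtain T where T: "S = insert a T" "T \<subseteq> B" "card T = k" by auto
      then have "finite T" "a \<notin> T" using assms rev_finite_subset by auto
      then show ?thesis using T by auto
    qed
  qed
  have disj: "?A \<inter> insert a ` ?C = {}" using assms by auto
  have fin: "finite ?A" "finite ?C" using assms by auto
  have inj: "inj_on (insert a) ?C" using assms by (auto simp: inj_on_def)
  have "ss (insert a B) (Suc k) = (\<Sum>S\<in>?A. \<Prod>b\<in>S. content b) + (\<Sum>S\<in>insert a ` ?C. \<Prod>b\<in>S. content b)"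
    unfolding ss_def eq using fin disj by (simp add: sum.union_disjoint)
  also have "(\<Sum>S\<in>insert a ` ?C. \<Prod>b\<in>S. content b) = (\<Sum>S\<in>?C. content a * (\<Prod>b\<in>S. content b))"
  proof -
    have "(\<Sum>S\<in>insert a ` ?C. \<Prod>b\<in>S. content b) = (\<Sum>S\<in>?C. \<Prod>b\<in>insert a S. content b)"
      by (simp add: sum.reindex[OF inj])
    also have "\<dots> = (\<Sum>S\<in>?C. content a * (\<Prod>b\<in>S. content b))"
    proof (rule sum.cong[OF refl])
    fix S assume "S \<in> ?C"
    then have "finite S" "a \<notin> S" using assms by (auto intro: finite_subset)
    then show "(\<Prod>b\<in>insert a S. content b) = content a * (\<Prod>b\<in>S. content b)" by simp
    qed
    finally show ?thesis .
  qed
  finally show ?thesis by (simp add: ss_def sum_distrib_left)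
qed

lemma ss_gen: "finite B \<Longrightarrow> Abs_fps (ss B) = (\<Prod>b\<in>B. 1 + fps_const (content b) * fps_X)
   \<and> Abs_fps (\<lambda>n. (-1)^n * ss B n) = QQ B"
proof (induction B rule: finite_induct)
  case empty
  have "Abs_fps (ss {}) $ n = (1::real fps) $ n \<and> Abs_fps (\<lambda>n. (-1)^n * ss {} n) $ n = (1::real fps) $ n" for n
    by (cases n) (simp add: ss_0[OF finite.emptyI], simp add: ss_def)
  then have "Abs_fps (ss {}) = 1 \<and> Abs_fps (\<lambda>n. (-1)^n * ss {} n) = 1"
    by (simp add: fps_eq_iff)
  then show ?case by (simp add: QQ_def)
next
  case (insert a B)
  have "Abs_fps (ss (insert a B)) = Abs_fps (ss B) * (1 + fps_const (content a) * fps_X)"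
  proof (subst fps_eq_iff, intro allI)
    fix n
    have e: "Abs_fps (ss B) * (1 + fps_const (content a) * fps_X) =
       Abs_fps (ss B) + fps_const (content a) * (fps_X * Abs_fps (ss B))"
      by (simp add: algebra_simps)
    show "Abs_fps (ss (insert a B)) $ n = (Abs_fps (ss B) * (1 + fps_const (content a) * fps_X)) $ n"
      unfolding e by (cases n) (auto simp: ss_0 ss_Suc insert.hyps fps_X_mult_nth)
  qed
  moreover have "Abs_fps (\<lambda>n. (-1)^n * ss (insert a B) n) = Abs_fps (\<lambda>n. (-1)^n * ss B n) * (1 - fps_const (content a) * fps_X)"
  proof (subst fps_eq_iff, intro allI)
    fix n
    have e: "Abs_fps (\<lambda>n. (-1)^n * ss B n) * (1 - fps_const (content a) * fps_X) =
       Abs_fps (\<lambda>n. (-1)^n * ss B n) - fps_const (content a) * (fps_X * Abs_fps (\<lambda>n. (-1)^n * ss B n))"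
      by (simp add: algebra_simps)
    show "Abs_fps (\<lambda>n. (-1)^n * ss (insert a B) n) $ n = (Abs_fps (\<lambda>n. (-1)^n * ss B n) * (1 - fps_const (content a) * fps_X)) $ n"
      unfolding e by (cases n) (auto simp: ss_0 ss_Suc insert.hyps fps_X_mult_nth algebra_simps)
  qed
  ultimately show ?case using insert by (simp add: QQ_def mult.commute)
qed


lemma Dh_hh: "Dh xs = Abs_fps (hh (boxes xs))"
  unfolding Dh_def h_cr_def hh_def ..

lemma Ds_ss: "Dsigma xs = Abs_fps (ss (boxes xs))"
  unfolding Dsigma_def sigma_cr_def ss_def ..

theorem proposition5p1:
  assumes "is_partition xs"
  shows "Dp xs = F_ser xs
    \<and> F_ser xs = casimir0 xs / zeta_fps - fps_const (energy xs)
    \<and> Dh xs = fps_expf (fps_series (\<lambda>k. if k = 0 then 0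
                 else fps_const (fps_nth (F_ser xs) k) * zdz_pow_log 1 k))
    \<and> Dsigma xs = fps_expf (- fps_series (\<lambda>k. if k = 0 then 0
                 else fps_const (fps_nth (F_ser xs) k) * zdz_pow_log (-1) k))
    \<and> Dh xs = inverse (Dsigma xs oo (- fps_X))"
proof -
  define B where "B = boxes xs"
  have fin: "finite B" unfolding B_def by (rule finite_boxes)
  have LL0: "\<And>c. LL c $ 0 = 0" by (simp add: LL_def)
  have hQ: "Dh xs * QQ B = 1" unfolding Dh_hh B_def[symmetric] using hh_gen[OF fin] .
  define E where "E = fps_expf (fps_series (\<lambda>k. if k = 0 then 0
                 else fps_const (fps_nth (F_ser xs) k) * zdz_pow_log 1 k))"
  have "E = fps_expf (\<Sum>b\<in>B. LL (content b))"
    unfolding E_def series_eq B_def by simp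
  also have "\<dots> = (\<Prod>b\<in>B. fps_expf (LL (content b)))"
    using fin LL0 by (simp add: expf_sum)
  finally have "E * QQ B = (\<Prod>b\<in>B. fps_expf (LL (content b)) * (1 - fps_const (content b) * fps_X))"
    unfolding QQ_def by (simp add: prod.distrib)
  then have EQ: "E * QQ B = 1" by (simp add: expf_LL)
  have "Dh xs = Dh xs * (E * QQ B)" using EQ by simp
  also have "\<dots> = E * (Dh xs * QQ B)" by (simp only: mult_ac)
  finally have h: "Dh xs = E" using hQ by simp
  have sg: "Abs_fps (ss B) = (\<Prod>b\<in>B. 1 + fps_const (content b) * fps_X)"
       "Abs_fps (\<lambda>n. (-1)^n * ss B n) = QQ B" using ss_gen[OF fin] by auto
  have "fps_expf (- fps_series (\<lambda>k. if k = 0 then 0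
                 else fps_const (fps_nth (F_ser xs) k) * zdz_pow_log (-1) k))
     = fps_expf (\<Sum>b\<in>B. - LL (- content b))"
    unfolding series_eq B_def by (simp add: sum_negf)
  also have "\<dots> = (\<Prod>b\<in>B. fps_expf (- LL (- content b)))"
    using fin LL0 by (simp add: expf_sum)
  also have "\<dots> = Dsigma xs"
    unfolding expf_LL2 Ds_ss B_def[symmetric] sg(1) ..
  finally have s: "Dsigma xs = fps_expf (- fps_series (\<lambda>k. if k = 0 then 0
                 else fps_const (fps_nth (F_ser xs) k) * zdz_pow_log (-1) k))" by simp
  have "Dsigma xs oo (- fps_X) = QQ B"
    unfolding fps_compose_uminus' Ds_ss B_def[symmetric] sg(2)[symmetric] by simp
  then have inv: "inverse (Dsigma xs oo (- fps_X)) = Dh xs"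
    using hQ by (intro fps_inverse_unique) (simp add: mult.commute)
  show ?thesis using Dp_eq F_ser_def h E_def s inv by simp
qed

end
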